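(* Let $u=s_{i_1}\cdots s_{i_l}$ and $v=s_{j_1}\cdots s_{j_m}$ be reduced words for glides in $\hat S_n$ with offsets $k_1$ and $k_2$ respectively, such that $s_{j_1}\cdots s_{j_m}s_{i_1}\cdots s_{i_l}$ is a reduced word. Number the wires of the wiring diagram of $v|u$ as described below and assign real parameters $\alpha_1,\dots,\alpha_n$ to wires $1,\dots,n$. Let $\mathbf z_{-\infty}\in\mathbb R^m$ and $\mathbf w\in\mathbb R^l$ be the weights on the letters of $v$ and $u$ respectively given by the rule: the weight of a crossing equals $\alpha_{\mathrm{up}}-\alpha_{\mathrm{low}}$, where $\mathrm{up}$ and $\mathrm{low}$ are the numbers of its upper and lower wires. Then $F_{v,u}(\mathbf z_{-\infty},\mathbf w)=(\mathbf w,\mathbf z_{-\infty})$. Furthermore, in the resulting weighted word $s_{i_1+k_2}(w_1)\cdots s_{i_l+k_2}(w_l)s_{j_1-k_1}(z_1)\cdots s_{j_m-k_1}(z_m)$ (with the wires carried along), every crossing weight again equals $\alpha_{\mathrm{up}}-\alpha_{\mathrm{low}}$ for its upper and lower wires.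
   Context: $\hat S_n$ is the affine symmetric group with generators $s_0,\dots,s_{n-1}$ (indices mod $n$), relations $s_i^2=1$, $s_is_js_i=s_js_is_j$ if $i-j\equiv\pm1$, $s_is_j=s_js_i$ if $i-j\not\equiv0,\pm1\pmod n$; $\rho$ is the automorphism $s_i\mapsto s_{i+1}$; $\phi:\hat S_n\to S_n$ sends $s_i\mapsto(i\ i+1)$ ($1\le i\le n-1$), $s_0\mapsto(1\ n)$; a glide of offset $k\in\{0,\dots,n-1\}$ is an element $g$ with $\phi(g)(j)\equiv j+k\pmod n$ for all $j$. For glides $u,v$ of offsets $k_1,k_2$ one has $vu=\rho^{k_2}(u)\rho^{-k_1}(v)$, so when $vu$ is reduced the words $s_{j_1}\cdots s_{j_m}s_{i_1}\cdots s_{i_l}$ and $s_{i_1+k_2}\cdots s_{i_l+k_2}s_{j_1-k_1}\cdots s_{j_m-k_1}$ are connected by braid and commutation moves. Write $s_i(a)$ for a letter $s_i$ carrying a weight $a$. Weighted moves: $s_i(a)s_j(b)s_i(c)\mapsto s_j\!\big(\tfrac{bc}{a+c}\big)s_i(a+c)s_j\!\big(\tfrac{ab}{a+c}\big)$ if $i-j\equiv\pm1$, and $s_i(a)s_j(b)\mapsto s_j(b)s_i(a)$ if $i-j\not\equiv0,\pm1\pmod n$. $F_{v,u}(\mathbf z,\mathbf y)=(\mathbf y',\mathbf z')$ is defined by applying such weighted moves to $s_{j_1}(z_1)\cdots s_{j_m}(z_m)s_{i_1}(y_1)\cdots s_{i_l}(y_l)$ to reach $s_{i_1+k_2}(y'_1)\cdots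 s_{i_l+k_2}(y'_l)s_{j_1-k_1}(z'_1)\cdots s_{j_m-k_1}(z'_m)$ (the result is independent of the sequence of moves). Wiring diagrams: a word is drawn left to right on a cylinder with $n$ wires in positions $1,\dots,n$ (mod $n$); a letter $s_i$ is a crossing of the wires in positions $i$ and $i+1$ ($s_0$: positions $n$ and $1$). The upper wire of a crossing $s_i$ is the one passing from position $i+1$ to position $i$ (for $s_0$: from position $1$ to position $n$); the other is the lower wire. In the diagram of $v|u$ (the word $vu$ with a cut between $v$ and $u$), wire number $i$ is the wire occupying position $i$ at the cut. *)

theory Defs
  imports Complex_Main
begin

text \<open>Affine symmetric group, realised concretely as affine permutations of the integers.
  The generator s_i (0 \<le> i < n) acts on int by swapping every x with x mod n = i
  and x + 1 (so s_0 swaps the classes of n and 1).\<close>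

definition gen_act :: "nat \<Rightarrow> nat \<Rightarrow> int \<Rightarrow> int" where
  "gen_act n i x =
     (if x mod int n = int i mod int n then x + 1
      else if x mod int n = (int i + 1) mod int n then x - 1 else x)"

definition word_eval :: "nat \<Rightarrow> nat list \<Rightarrow> int \<Rightarrow> int" where
  "word_eval n ws = foldr (\<lambda>i f. gen_act n i \<circ> f) ws id"

definition is_word :: "nat \<Rightarrow> nat list \<Rightarrow> bool" where
  "is_word n ws \<longleftrightarrow> set ws \<subseteq> {..<n}"

definition reduced :: "nat \<Rightarrow> nat list \<Rightarrow> bool" where
  "reduced n ws \<longleftrightarrow> is_word n ws \<and>
     (\<forall>ws'. is_word n ws' \<and> word_eval n ws' = word_eval n ws \<longrightarrow> length ws \<le> length ws')"

definition glide :: "nat \<Rightarrow> nat list \<Rightarrow> nat \<Rightarrow> bool" where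
  "glide n ws k \<longleftrightarrow> k < n \<and> (\<forall>j::int. word_eval n ws j mod int n = (j + int k) mod int n)"

definition adj :: "nat \<Rightarrow> nat \<Rightarrow> nat \<Rightarrow> bool" where
  "adj n i j \<longleftrightarrow> j = (i + 1) mod n \<or> i = (j + 1) mod n"

inductive wmove :: "nat \<Rightarrow> (nat \<times> real) list \<Rightarrow> (nat \<times> real) list \<Rightarrow> bool" for n where
  braid: "adj n i j \<Longrightarrow> a + c \<noteq> 0 \<Longrightarrow>
    wmove n (xs @ [(i, a), (j, b), (i, c)] @ ys)
            (xs @ [(j, b * c / (a + c)), (i, a + c), (j, a * b / (a + c))] @ ys)"
| comm: "i \<noteq> j \<Longrightarrow> \<not> adj n i j \<Longrightarrow>
    wmove n (xs @ [(i, a), (j, b)] @ ys) (xs @ [(j, b), (i, a)] @ ys)"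

text \<open>Positions are residues 0..<n (residue 0 stands for position n).
  A labelling L maps a position to the number of the wire occupying it.\<close>

definition pos_swap :: "nat \<Rightarrow> nat \<Rightarrow> nat \<Rightarrow> nat" where
  "pos_swap n i p = (if p = i mod n then (i + 1) mod n
                     else if p = (i + 1) mod n then i mod n else p)"

definition step_lab :: "nat \<Rightarrow> (nat \<Rightarrow> nat) \<Rightarrow> nat \<Rightarrow> nat \<Rightarrow> nat" where
  "step_lab n L i = L \<circ> pos_swap n i"

definition cut_lab :: "nat \<Rightarrow> nat \<Rightarrow> nat" where
  "cut_lab n p = (if p = 0 then n else p)"

text \<open>Labelling at the left end of the diagram of v|u (undo the crossings of v).\<close>

definition left_lab :: "nat \<Rightarrow> nat list \<Rightarrow> nat \<Rightarrow> nat" where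
  "left_lab n v = fold (\<lambda>i L. step_lab n L i) (rev v) (cut_lab n)"

text \<open>Every crossing weight equals alpha_up - alpha_low: the upper wire of s_i is the one
  at position i+1 before the crossing, the lower one is the one at position i.\<close>

fun wires_ok :: "nat \<Rightarrow> (nat \<Rightarrow> real) \<Rightarrow> (nat \<Rightarrow> nat) \<Rightarrow> (nat \<times> real) list \<Rightarrow> bool" where
  "wires_ok n \<alpha> L [] = True"
| "wires_ok n \<alpha> L ((i, a) # xs) =
     (a = \<alpha> (L ((i + 1) mod n)) - \<alpha> (L (i mod n)) \<and> wires_ok n \<alpha> (step_lab n L i) xs)"

end

theory Submission
  imports Defs
begin


definition psw :: "nat \<Rightarrow> nat list \<Rightarrow> nat \<Rightarrow> nat" where
  "psw n ws = foldr (\<lambda>i f. pos_swap n i \<circ> f) ws id"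

lemma psw_Nil[simp]: "psw n [] = id" by (simp add: psw_def)
lemma psw_Cons[simp]: "psw n (i # ws) = pos_swap n i \<circ> psw n ws" by (simp add: psw_def)
lemma psw_append: "psw n (xs @ ys) = psw n xs \<circ> psw n ys"
  by (induction xs) (auto simp: o_assoc)

lemma wires_ok_append:
  "wires_ok n \<alpha> L (xs @ ys) \<longleftrightarrow> wires_ok n \<alpha> L xs \<and> wires_ok n \<alpha> (L \<circ> psw n (map fst xs)) ys"
  by (induction xs arbitrary: L) (auto simp: step_lab_def o_assoc)

lemma pos_swap_lt: "0 < n \<Longrightarrow> p < n \<Longrightarrow> pos_swap n i p < n"
  by (simp add: pos_swap_def)

lemma pos_swap_inv: "2 \<le> n \<Longrightarrow> pos_swap n i (pos_swap n i p) = p"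
proof -
  assume n: "2 \<le> n"
  have "(i + 1) mod n \<noteq> i mod n"
  proof
    assume h: "(i + 1) mod n = i mod n"
    have e: "(i + 1) mod n = (i mod n + 1) mod n" by (simp add: mod_simps)
    have lt: "i mod n < n" using n by simp
    show False
    proof (cases "i mod n + 1 < n")
      case True then show False using h e by simp
    next
      case False then have "i mod n + 1 = n" using lt by simp
      then show False using h e n by simp
    qed
  qed
  then show ?thesis by (auto simp: pos_swap_def)
qed

lemma psw_rev_inv: "2 \<le> n \<Longrightarrow> psw n (rev ws) (psw n ws p) = p"
  by (induction ws arbitrary: p) (auto simp: psw_append pos_swap_inv)

lemma fold_lab: "fold (\<lambda>i L. step_lab n L i) xs L = L \<circ> psw n xs"
  by (induction xs arbitrary: L) (auto simp: step_lab_def psw_append o_assoc)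

lemma left_lab_eq: "left_lab n v = cut_lab n \<circ> psw n (rev v)"
  by (simp add: left_lab_def fold_lab)

lemma word_eval_Cons: "word_eval n (i # ws) x = gen_act n i (word_eval n ws x)"
  by (simp add: word_eval_def)

lemma gen_act_mod:
  assumes n: "0 < n"
  shows "gen_act n i y mod int n = int (pos_swap n i (nat (y mod int n)))"
proof -
  define r where "r = nat (y mod int n)"
  have yr: "y mod int n = int r" using n by (simp add: r_def)
  have rl: "r < n" using n yr by (metis of_nat_less_iff pos_mod_bound of_nat_0_less_iff)
  have c1: "(y mod int n = int i mod int n) = (r = i mod n)" using yr by (auto simp flip: zmod_int)
  have c2: "(y mod int n = (int i + 1) mod int n) = (r = (i + 1) mod n)" using yr
    by (metis of_nat_Suc Suc_eq_plus1 add.commute of_nat_eq_iff zmod_int)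
  have p1: "(y + 1) mod int n = int ((r + 1) mod n)"
    by (metis yr mod_add_left_eq of_nat_1 of_nat_add zmod_int)
  have p2: "r \<noteq> 0 \<Longrightarrow> (y - 1) mod int n = int ((r - 1) mod n)"
    by (metis yr mod_diff_left_eq of_nat_1 of_nat_diff zmod_int less_one not_less)
  have nr: "nat (y mod int n) = r" by (simp add: r_def)
  show ?thesis
  proof (cases "r = i mod n")
    case True
    have g: "gen_act n i y = y + 1" using c1 True by (simp add: gen_act_def)
    have "pos_swap n i r = (i + 1) mod n" using True by (simp add: pos_swap_def)
    then show ?thesis using g nr p1 True by (simp add: mod_simps)
  next
    case F: False
    show ?thesis
    proof (cases "r = (i + 1) mod n")
      case True
      have "(y - 1) mod int n = ((int i + 1) - 1) mod int n" using c2 True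
        by (metis mod_diff_left_eq)
      then have m: "(y - 1) mod int n = int (i mod n)" by (simp add: zmod_int)
      have g: "gen_act n i y = y - 1" using c1 c2 F True by (simp add: gen_act_def)
      have "pos_swap n i r = i mod n" using True F by (simp add: pos_swap_def)
      then show ?thesis using g nr m by simp
    next
      case False
      have g: "gen_act n i y = y" using c1 c2 F False by (simp add: gen_act_def)
      have "pos_swap n i r = r" using False F by (simp add: pos_swap_def)
      then show ?thesis using g nr yr by simp
    qed
  qed
qed

lemma psw_word_eval:
  assumes "0 < n" "p < n"
  shows "int (psw n ws p) = word_eval n ws (int p) mod int n \<and> psw n ws p < n"
proof (induction ws)
  case Nil then show ?case using assms by (simp add: word_eval_def)
next
  case (Cons i ws)
  have "nat (word_eval n ws (int p) mod int n) = psw n ws p" using Cons by (metis nat_int)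
  then show ?case using assms Cons
    by (simp add: word_eval_Cons gen_act_mod pos_swap_lt)
qed

lemma ne1: "(2::nat) \<le> n \<Longrightarrow> (i + 1) mod n \<noteq> i mod n"
proof
  assume n: "2 \<le> n" and h: "(i + 1) mod n = i mod n"
  have e: "(i + 1) mod n = (i mod n + 1) mod n" by (simp add: mod_Suc_eq)
  have lt: "i mod n < n" using n by simp
  show False
  proof (cases "i mod n + 1 < n")
    case True then show False using h e by simp
  next
    case False then have "i mod n + 1 = n" using lt by simp
    then show False using h e n by simp
  qed
qed

lemma ne2: "(3::nat) \<le> n \<Longrightarrow> (x::nat) < n \<Longrightarrow> ((x + 1) mod n + 1) mod n \<noteq> x"
proof
  assume n: "3 \<le> n" and x: "x < n" and h: "((x + 1) mod n + 1) mod n = x"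
  have e: "((x + 1) mod n + 1) mod n = (x + 2) mod n" by (simp add: mod_Suc_eq)
  show False
  proof (cases "x + 2 < n")
    case True then show False using h e by simp
  next
    case False
    then have "(x + 2) mod n = (x + 2 - n) mod n" by (simp add: le_mod_geq)
    also have "\<dots> = x + 2 - n" using x n False by (intro mod_less) linarith
    finally have "(x + 2) mod n = x + 2 - n" .
    then show False using h e n False by simp
  qed
qed

lemma modk_eq:
  fixes p q k n :: nat
  shows "((p + k) mod n = (q + k) mod n) = (p mod n = q mod n)"
proof
  assume h: "(p + k) mod n = (q + k) mod n"
  have h': "(int p + int k) mod int n = (int q + int k) mod int n" using h by (metis of_nat_add zmod_int)
  have a: "int p mod int n = ((int p + int k) mod int n - int k) mod int n" by (simp add: mod_diff_left_eq)
  have b: "int q mod int n = ((int q + int k) mod int n - int k) mod int n" by (simp add: mod_diff_left_eq)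
  have "int p mod int n = int q mod int n" using a b h' by simp
  then show "p mod n = q mod n" by (metis of_nat_eq_iff zmod_int)
next
  assume "p mod n = q mod n" then show "(p + k) mod n = (q + k) mod n" by (metis mod_add_left_eq)
qed

lemma braid_ok:
  assumes adj: "adj n i j" and ac: "a + c \<noteq> 0" and n: "3 \<le> n" and i: "i < n" and j: "j < n"
    and ok: "wires_ok n \<alpha> L [(i,a),(j,b),(i,c)]"
  shows "wires_ok n \<alpha> L [(j, b*c/(a+c)),(i,a+c),(j,a*b/(a+c))] \<and> psw n [j,i,j] = psw n [i,j,i]"
  using adj unfolding adj_def
proof
  assume ji: "j = (i + 1) mod n"
  define C where "C = (j + 1) mod n"
  have fi: "i mod n = i" "Suc i mod n = j" using i ji by auto
  have fj: "j mod n = j" "Suc j mod n = C" using j C_def by auto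
  have d: "i \<noteq> j" "j \<noteq> C" "i \<noteq> C"
    using ne1[of n i] ne1[of n j] ne2[OF n i] n i j ji C_def by auto
  have ok': "a = \<alpha> (L j) - \<alpha> (L i)" "b = \<alpha> (L C) - \<alpha> (L i)" "c = \<alpha> (L C) - \<alpha> (L j)"
    using ok d by (auto simp: step_lab_def pos_swap_def fi fj)
  have bb: "b = a + c" using ok' by simp
  have w: "b*c/(a+c) = c" "a*b/(a+c) = a" using ac bb by auto
  have "wires_ok n \<alpha> L [(j, b*c/(a+c)),(i,a+c),(j,a*b/(a+c))]"
    unfolding w using ok' d by (auto simp: step_lab_def pos_swap_def fi fj)
  moreover have "psw n [j,i,j] = psw n [i,j,i]"
    using d by (auto simp: pos_swap_def fi fj fun_eq_iff)
  ultimately show ?thesis by blast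
next
  assume ij: "i = (j + 1) mod n"
  define C where "C = (i + 1) mod n"
  have fj: "j mod n = j" "Suc j mod n = i" using j ij by auto
  have fi: "i mod n = i" "Suc i mod n = C" using i C_def by auto
  have d: "j \<noteq> i" "i \<noteq> C" "j \<noteq> C"
    using ne1[of n i] ne1[of n j] ne2[OF n j] n i j ij C_def by auto
  have ok': "a = \<alpha> (L C) - \<alpha> (L i)" "b = \<alpha> (L C) - \<alpha> (L j)" "c = \<alpha> (L i) - \<alpha> (L j)"
    using ok d by (auto simp: step_lab_def pos_swap_def fi fj)
  have bb: "b = a + c" using ok' by simp
  have w: "b*c/(a+c) = c" "a*b/(a+c) = a" using ac bb by auto
  have "wires_ok n \<alpha> L [(j, b*c/(a+c)),(i,a+c),(j,a*b/(a+c))]"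
    unfolding w using ok' d by (auto simp: step_lab_def pos_swap_def fi fj)
  moreover have "psw n [j,i,j] = psw n [i,j,i]"
    using d by (auto simp: pos_swap_def fi fj fun_eq_iff)
  ultimately show ?thesis by blast
qed

lemma comm_ok:
  assumes ij: "i \<noteq> j" and na: "\<not> adj n i j" and i: "i < n" and j: "j < n"
    and ok: "wires_ok n \<alpha> L [(i,a),(j,b)]"
  shows "wires_ok n \<alpha> L [(j,b),(i,a)] \<and> psw n [j,i] = psw n [i,j]"
proof -
  define I where "I = (i + 1) mod n"
  define J where "J = (j + 1) mod n"
  have f: "i mod n = i" "Suc i mod n = I" "j mod n = j" "Suc j mod n = J"
    using i j I_def J_def by auto
  have "I \<noteq> J" using modk_eq[of i 1 n j] ij i j I_def J_def by auto
  then have d: "i \<noteq> j" "i \<noteq> J" "I \<noteq> j" "I \<noteq> J"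
    using ij na I_def J_def by (auto simp: adj_def)
  have ok': "a = \<alpha> (L I) - \<alpha> (L i)" "b = \<alpha> (L J) - \<alpha> (L j)"
    using ok d by (auto simp: step_lab_def pos_swap_def f)
  have "wires_ok n \<alpha> L [(j,b),(i,a)]"
    using ok' d by (auto simp: step_lab_def pos_swap_def f)
  moreover have "psw n [j,i] = psw n [i,j]"
    using d by (auto simp: pos_swap_def f fun_eq_iff)
  ultimately show ?thesis by blast
qed

lemma wires_ok_unique:
  "wires_ok n \<alpha> L xs \<Longrightarrow> wires_ok n \<alpha> L ys \<Longrightarrow> map fst xs = map fst ys \<Longrightarrow> xs = ys"
proof (induction xs arbitrary: ys L)
  case Nil then show ?case by simp
next
  case (Cons x xs)
  then show ?case by (cases x; cases ys) auto
qed



lemma wmove_ok: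
  assumes "wmove n xs ys" "3 \<le> n" "set (map fst xs) \<subseteq> {..<n}" "wires_ok n \<alpha> L xs"
  shows "wires_ok n \<alpha> L ys \<and> set (map fst ys) \<subseteq> {..<n}"
  using assms
proof induction
  case (braid i j a c xs b ys)
  let ?L1 = "L \<circ> psw n (map fst xs)"
  have ij: "i < n" "j < n" using braid.prems by auto
  have mf: "map fst [(i,a),(j,b),(i,c)] = [i,j,i]" "map fst [(j, b*c/(a+c)),(i,a+c),(j,a*b/(a+c))] = [j,i,j]" by simp_all
  have ok0: "wires_ok n \<alpha> L xs \<and> wires_ok n \<alpha> ?L1 [(i,a),(j,b),(i,c)] \<and> wires_ok n \<alpha> (?L1 \<circ> psw n [i,j,i]) ys"
    using braid.prems(3) by (simp only: wires_ok_append mf)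
  then have ok: "wires_ok n \<alpha> ?L1 [(i,a),(j,b),(i,c)]" by blast
  have B: "wires_ok n \<alpha> ?L1 [(j, b*c/(a+c)),(i,a+c),(j,a*b/(a+c))] \<and> psw n [j,i,j] = psw n [i,j,i]"
    using braid_ok[OF braid.hyps(1,2) braid.prems(1) ij ok] .
  have "wires_ok n \<alpha> L (xs @ [(j, b*c/(a+c)),(i,a+c),(j,a*b/(a+c))] @ ys)"
    using B unfolding wires_ok_append mf using ok0 by (simp only:)
  then show ?case using ij braid.prems(2) by simp
next
  case (comm i j xs a b ys)
  let ?L1 = "L \<circ> psw n (map fst xs)"
  have ij: "i < n" "j < n" using comm.prems by auto
  have mf: "map fst [(i,a),(j,b)] = [i,j]" "map fst [(j,b),(i,a)] = [j,i]" by simp_all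
  have ok0: "wires_ok n \<alpha> L xs \<and> wires_ok n \<alpha> ?L1 [(i,a),(j,b)] \<and> wires_ok n \<alpha> (?L1 \<circ> psw n [i,j]) ys"
    using comm.prems(3) by (simp only: wires_ok_append mf)
  then have ok: "wires_ok n \<alpha> ?L1 [(i,a),(j,b)]" by blast
  have B: "wires_ok n \<alpha> ?L1 [(j,b),(i,a)] \<and> psw n [j,i] = psw n [i,j]"
    using comm_ok[OF comm.hyps(1,2) ij ok] .
  have "wires_ok n \<alpha> L (xs @ [(j,b),(i,a)] @ ys)"
    using B unfolding wires_ok_append mf using ok0 by (simp only:)
  then show ?case using ij comm.prems(2) by simp
qed

lemma star_ok:
  assumes "(wmove n)\<^sup>*\<^sup>* xs ys" "3 \<le> n" "set (map fst xs) \<subseteq> {..<n}" "wires_ok n \<alpha> L xs"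
  shows "wires_ok n \<alpha> L ys \<and> set (map fst ys) \<subseteq> {..<n}"
  using assms(1)
proof (induction rule: rtranclp_induct)
  case base then show ?case using assms by simp
next
  case (step y z) then show ?case using wmove_ok assms(2) by blast
qed

lemma pos_swap_shift:
  assumes n: "0 < n" and p: "p < n"
  shows "pos_swap n ((i + k) mod n) ((p + k) mod n) = (pos_swap n i p + k) mod n"
proof -
  have C0: "((i + k) mod n + 1) mod n = (i + k + 1) mod n" by (rule mod_add_left_eq)
  have C1: "((i + 1) mod n + k) mod n = (i + 1 + k) mod n" by (rule mod_add_left_eq)
  have C: "((i + k) mod n + 1) mod n = ((i + 1) mod n + k) mod n" using C0 C1 by (simp add: ac_simps)
  have D: "(i mod n + k) mod n = (i + k) mod n" by (rule mod_add_left_eq)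
  have A: "((p + k) mod n = (i + k) mod n) = (p = i mod n)" using modk_eq[of p k n i] p by simp
  have B: "((p + k) mod n = ((i + 1) mod n + k) mod n) = (p = (i + 1) mod n)"
    using modk_eq[of p k n "(i + 1) mod n"] p by simp
  show ?thesis
  proof (cases "p = i mod n")
    case True
    then show ?thesis using A C by (simp add: pos_swap_def)
  next
    case F: False
    show ?thesis
    proof (cases "p = (i + 1) mod n")
      case True
      then show ?thesis using A B C D F by (simp add: pos_swap_def)
    next
      case False
      then show ?thesis using A B C F by (simp add: pos_swap_def)
    qed
  qed
qed

lemma shift_ok:
  assumes n: "0 < n"
  shows "(\<forall>p<n. L' ((p + k) mod n) = L p) \<Longrightarrow> length ws = length us \<Longrightarrow>
    wires_ok n \<alpha> L' (zip (map (\<lambda>i. (i + k) mod n) us) ws) = wires_ok n \<alpha> L (zip us ws) \<and>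
    (\<forall>p<n. (L' \<circ> psw n (map (\<lambda>i. (i + k) mod n) us)) ((p + k) mod n) = (L \<circ> psw n us) p)"
proof (induction us arbitrary: ws L L')
  case Nil then show ?case by simp
next
  case (Cons i us)
  obtain y ws' where ws: "ws = y # ws'" using Cons.prems(2) by (cases ws) auto
  have R': "\<forall>p<n. (L' \<circ> pos_swap n ((i + k) mod n)) ((p + k) mod n) = (L \<circ> pos_swap n i) p"
    using Cons.prems(1) pos_swap_shift[OF n] n pos_swap_lt by simp
  note IH = Cons.IH[OF R', of ws']
  have len: "length ws' = length us" using Cons.prems(2) ws by simp
  have C0: "((i + k) mod n + 1) mod n = (i + k + 1) mod n" by (rule mod_add_left_eq)
  have C1: "((i + 1) mod n + k) mod n = (i + 1 + k) mod n" by (rule mod_add_left_eq)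
  have C: "((i + k) mod n + 1) mod n = ((i + 1) mod n + k) mod n" using C0 C1 by (simp add: ac_simps)
  have D: "(i mod n + k) mod n = (i + k) mod n" by (rule mod_add_left_eq)
  have w1: "L' (((i + k) mod n + 1) mod n) = L ((i + 1) mod n)"
    using C Cons.prems(1) n by simp
  have w2: "L' ((i + k) mod n) = L (i mod n)"
    using D Cons.prems(1) n by (metis mod_less_divisor)
  show ?case using IH[OF len] w1 w2 unfolding ws
    by (simp add: step_lab_def comp_def)
qed

lemma glide_psw:
  assumes n: "0 < n" and g: "glide n ws k"
  shows "\<forall>p<n. psw n ws p = (p + k) mod n"
proof (intro allI impI)
  fix p assume p: "p < n"
  have "int (psw n ws p) = word_eval n ws (int p) mod int n" using psw_word_eval[OF n p] by blast
  also have "\<dots> = (int p + int k) mod int n" using g by (simp add: glide_def)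
  also have "\<dots> = int ((p + k) mod n)" by (simp add: zmod_int)
  finally show "psw n ws p = (p + k) mod n" by simp
qed

theorem lemma4p2:
  fixes n k1 k2 :: nat and u v :: "nat list" and \<alpha> :: "nat \<Rightarrow> real" and z w :: "real list"
  assumes "3 \<le> n"
    and "reduced n u" and "glide n u k1"
    and "reduced n v" and "glide n v k2"
    and "reduced n (v @ u)"
    and "length z = length v" and "length w = length u"
    and "wires_ok n \<alpha> (left_lab n v) (zip (v @ u) (z @ w))"
  shows "\<forall>ws'. (wmove n)\<^sup>*\<^sup>* (zip (v @ u) (z @ w)) ws' \<and>
           map fst ws' = map (\<lambda>i. (i + k2) mod n) u @ map (\<lambda>j. (j + n - k1) mod n) v
         \<longrightarrow> map snd ws' = w @ z \<and> wires_ok n \<alpha> (left_lab n v) ws'"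
proof (intro allI impI)
  fix ws'
  assume H: "(wmove n)\<^sup>*\<^sup>* (zip (v @ u) (z @ w)) ws' \<and>
           map fst ws' = map (\<lambda>i. (i + k2) mod n) u @ map (\<lambda>j. (j + n - k1) mod n) v"
  have n0: "0 < n" "2 \<le> n" using assms(1) by auto
  have k: "k1 < n" "k2 < n" using assms(3,5) by (auto simp: glide_def)
  define L0 where "L0 = left_lab n v"
  have lenvu: "length (v @ u) = length (z @ w)" using assms(7,8) by simp
  have letters: "set (map fst (zip (v @ u) (z @ w))) \<subseteq> {..<n}"
    using assms(6) lenvu by (simp add: reduced_def is_word_def)
  have okws: "wires_ok n \<alpha> L0 ws'"
    using star_ok[of n _ ws', OF _ assms(1) letters] H assms(9) L0_def by blast
  have Gv: "\<forall>p<n. psw n v p = (p + k2) mod n" using glide_psw[OF n0(1) assms(5)] .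
  have Gu: "\<forall>p<n. psw n u p = (p + k1) mod n" using glide_psw[OF n0(1) assms(3)] .
  have L0e: "L0 = cut_lab n \<circ> psw n (rev v)" by (simp add: L0_def left_lab_eq)
  have R0: "\<forall>p<n. L0 ((p + k2) mod n) = cut_lab n p"
    using Gv psw_rev_inv[OF n0(2)] L0e by (metis comp_apply)
  have Lcut: "L0 \<circ> psw n v = cut_lab n"
    using psw_rev_inv[OF n0(2)] L0e by (simp add: fun_eq_iff)
  have zz: "zip (v @ u) (z @ w) = zip v z @ zip u w" using assms(7) by simp
  have okv: "wires_ok n \<alpha> L0 (zip v z)" and oku: "wires_ok n \<alpha> (cut_lab n) (zip u w)"
    using assms(9) assms(7) Lcut unfolding zz L0_def[symmetric] wires_ok_append by auto
  note S1 = shift_ok[OF n0(1) R0, of w u \<alpha>]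
  have S1a: "wires_ok n \<alpha> L0 (zip (map (\<lambda>i. (i + k2) mod n) u) w)" using S1 assms(8) oku by simp
  define X where "X = L0 \<circ> psw n (map (\<lambda>i. (i + k2) mod n) u)"
  have R1: "\<forall>p<n. X ((p + k2) mod n) = cut_lab n ((p + k1) mod n)"
    using S1 assms(8) Gu unfolding X_def by simp
  have R2: "\<forall>p<n. X ((p + (n - k1)) mod n) = L0 p"
  proof (intro allI impI)
    fix p assume p: "p < n"
    define q where "q = (p + (n - k1) + (n - k2)) mod n"
    have q: "q < n" using n0 by (simp add: q_def)
    have e1: "(q + k2) mod n = (p + (n - k1)) mod n"
    proof -
      have "(q + k2) mod n = (p + (n - k1) + (n - k2) + k2) mod n" unfolding q_def by (rule mod_add_left_eq)
      also have "p + (n - k1) + (n - k2) + k2 = (p + (n - k1)) + n" using k by simp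
      finally show ?thesis by simp
    qed
    have e2: "(q + k1) mod n = (p + (n - k2)) mod n"
    proof -
      have "(q + k1) mod n = (p + (n - k1) + (n - k2) + k1) mod n" unfolding q_def by (rule mod_add_left_eq)
      also have "p + (n - k1) + (n - k2) + k1 = (p + (n - k2)) + n" using k by simp
      finally show ?thesis by simp
    qed
    have e3: "((p + (n - k2)) mod n + k2) mod n = p"
    proof -
      have "((p + (n - k2)) mod n + k2) mod n = (p + (n - k2) + k2) mod n" by (rule mod_add_left_eq)
      also have "p + (n - k2) + k2 = p + n" using k by simp
      finally show ?thesis using p by simp
    qed
    have "X ((p + (n - k1)) mod n) = cut_lab n ((p + (n - k2)) mod n)"
      using R1 q e1 e2 by metis
    also have "\<dots> = L0 p" using R0 e3 n0(1) by (metis mod_less_divisor)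
    finally show "X ((p + (n - k1)) mod n) = L0 p" .
  qed
  note S2 = shift_ok[OF n0(1) R2, of z v \<alpha>]
  have mv: "map (\<lambda>j. (j + n - k1) mod n) v = map (\<lambda>i. (i + (n - k1)) mod n) v" using k by simp
  have S2a: "wires_ok n \<alpha> X (zip (map (\<lambda>j. (j + n - k1) mod n) v) z)"
    unfolding mv using S2 assms(7) okv by simp
  define T where "T = zip (map (\<lambda>i. (i + k2) mod n) u @ map (\<lambda>j. (j + n - k1) mod n) v) (w @ z)"
  have Te: "T = zip (map (\<lambda>i. (i + k2) mod n) u) w @ zip (map (\<lambda>j. (j + n - k1) mod n) v) z"
    using assms(8) by (simp add: T_def)
  have okT: "wires_ok n \<alpha> L0 T"
    unfolding Te wires_ok_append using S1a S2a assms(8) by (simp add: X_def)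
  have fT: "map fst T = map (\<lambda>i. (i + k2) mod n) u @ map (\<lambda>j. (j + n - k1) mod n) v"
    using assms(7,8) by (simp add: T_def)
  have "ws' = T" using wires_ok_unique[OF okws okT] H fT by simp
  moreover have "map snd T = w @ z" using assms(7,8) by (simp add: T_def)
  ultimately show "map snd ws' = w @ z \<and> wires_ok n \<alpha> (left_lab n v) ws'"
    using okws L0_def by simp
qed


end
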